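(* Let $N$ be an Orlicz function with $N(1)=1$ satisfying the $\Delta_2$-condition at zero, i.e. $\limsup_{u\to0}N(2u)/N(u)<\infty$. Let $U_N$ be the Banach sequence lattice of real sequences $a$ with $$\|a\|_{U_N}=\inf\Big\{u>0:\sum_{k=1}^\infty2^{k-1}N\Big(\frac{|a_k|}{u}\Big)\le1\Big\}<\infty.$$ Then $\|a\|_{l_N}\asymp\|\sum_{k=0}^\infty a^*_{2^k}e_{k+1}\|_{U_N}$ (more precisely $\|a\|_{l_N}\le\|\sum_{k\ge0}a^*_{2^k}e_{k+1}\|_{U_N}\le4\|a\|_{l_N}$), and $E_{l_N}=U_N$ with equivalent norms.
   Context: An Orlicz function is an increasing convex continuous function $N$ on $[0,\infty)$ with $N(0)=0$ and $\lim_{t\to\infty}N(t)=\infty$. The Orlicz sequence space $l_N$ consists of real sequences $a$ with $\|a\|_{l_N}=\inf\{u>0:\sum_kN(|a_k|/u)\le1\}<\infty$. $a^*$ is the nonincreasing rearrangement of $(|a_k|)$. For a symmetric sequence space $X$, $E_X$ is the Banach sequence lattice of real sequences $a$ with $\|a\|_{E_X}:=\|\sum_{k=1}^\infty a_k\sum_{i=2^{k-1}}^{2^k-1}e_i\|_X<\infty$. *)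

theory Defs
  imports "HOL-Analysis.Analysis"
begin

text \<open>Sequences are functions nat => real, indexed from 0: the paper's a_k is a (k-1).\<close>

definition orlicz_function :: "(real \<Rightarrow> real) \<Rightarrow> bool" where
  "orlicz_function N \<longleftrightarrow> mono_on {0..} N \<and> convex_on {0..} N \<and> continuous_on {0..} N
     \<and> N 0 = 0 \<and> filterlim N at_top at_top"

text \<open>Delta_2 at zero: limsup_{u->0+} N(2u)/N(u) < infinity (N positive on (0,inf) so the ratio makes sense).\<close>
definition delta2_zero :: "(real \<Rightarrow> real) \<Rightarrow> bool" where
  "delta2_zero N \<longleftrightarrow> (\<forall>u>0. N u > 0) \<and>
     Limsup (at_right 0) (\<lambda>u. ereal (N (2 * u) / N u)) < \<infinity>"

text \<open>Orlicz sequence norm (value \<infinity> = sequence not in l_N).\<close>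
definition lN_norm :: "(real \<Rightarrow> real) \<Rightarrow> (nat \<Rightarrow> real) \<Rightarrow> ennreal" where
  "lN_norm N a = Inf {ennreal u | u. u > 0 \<and> (\<Sum>k. ennreal (N (\<bar>a k\<bar> / u))) \<le> 1}"

text \<open>U_N norm: sum_{k>=1} 2^(k-1) N(|a_k|/u), i.e. sum_{j>=0} 2^j N(|a j|/u).\<close>
definition UN_norm :: "(real \<Rightarrow> real) \<Rightarrow> (nat \<Rightarrow> real) \<Rightarrow> ennreal" where
  "UN_norm N a = Inf {ennreal u | u. u > 0 \<and> (\<Sum>j. ennreal (2 ^ j * N (\<bar>a j\<bar> / u))) \<le> 1}"

text \<open>Nonincreasing rearrangement, paper indexing n >= 1:
  a*_n = inf {t >= 0 : #{k : |a_k| > t} < n}.\<close>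
definition rearr :: "(nat \<Rightarrow> real) \<Rightarrow> nat \<Rightarrow> real" where
  "rearr a n = Inf {t. t \<ge> 0 \<and> finite {k. \<bar>a k\<bar> > t} \<and> card {k. \<bar>a k\<bar> > t} < n}"

text \<open>Block index: paper position i = m+1 lies in block k with 2^(k-1) <= i < 2^k; returns k-1.\<close>
definition blk :: "nat \<Rightarrow> nat" where
  "blk m = (THE j. 2 ^ j \<le> m + 1 \<and> m + 1 < 2 ^ (j + 1))"

text \<open>Norm of E_{l_N}: || sum_k a_k sum_{i=2^(k-1)}^{2^k-1} e_i ||_{l_N}.\<close>
definition E_lN_norm :: "(real \<Rightarrow> real) \<Rightarrow> (nat \<Rightarrow> real) \<Rightarrow> ennreal" where
  "E_lN_norm N a = lN_norm N (\<lambda>m. a (blk m))"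

end

theory Submission
  imports Defs
begin

section \<open>Rearrangement basics\<close>

definition RS :: "(nat \<Rightarrow> real) \<Rightarrow> nat \<Rightarrow> real set" where
  "RS a n = {t. t \<ge> 0 \<and> finite {k. \<bar>a k\<bar> > t} \<and> card {k. \<bar>a k\<bar> > t} < n}"

lemma rearr_RS: "rearr a n = Inf (RS a n)"
  unfolding rearr_def RS_def by simp

lemma RS_ne:
  assumes "bounded (range a)" "n \<ge> 1"
  shows "RS a n \<noteq> {}"
proof -
  obtain B where B: "\<And>k. \<bar>a k\<bar> \<le> B" using assms(1) unfolding bounded_iff by auto
  have "{k. \<bar>a k\<bar> > max B 0} = {}" using B by (auto simp: not_less intro: order_trans)
  then have "max B 0 \<in> RS a n" using assms(2) unfolding RS_def by (simp only: mem_Collect_eq) simp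
  then show ?thesis by auto
qed

lemma RS_bdd: "bdd_below (RS a n)"
  unfolding RS_def by (rule bdd_belowI[of _ 0]) auto

lemma rearr_nonneg:
  assumes "bounded (range a)" "n \<ge> 1"
  shows "0 \<le> rearr a n"
  unfolding rearr_RS using RS_ne[OF assms] by (intro cInf_greatest) (auto simp: RS_def)

lemma rearr_le:
  assumes "t \<ge> 0" "finite {k. \<bar>a k\<bar> > t}" "card {k. \<bar>a k\<bar> > t} < n"
  shows "rearr a n \<le> t"
  unfolding rearr_RS using assms by (intro cInf_lower RS_bdd) (auto simp: RS_def)

lemma rearr_lt:
  assumes "bounded (range a)" "n \<ge> 1" "rearr a n < v"
  shows "\<exists>t. t < v \<and> finite {k. \<bar>a k\<bar> > t} \<and> card {k. \<bar>a k\<bar> > t} < n"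
  using cInf_lessD[OF RS_ne[OF assms(1,2)]] assms(3) unfolding rearr_RS RS_def by auto

lemma rearr_antimono:
  assumes "bounded (range a)" "1 \<le> m" "m \<le> n"
  shows "rearr a n \<le> rearr a m"
proof -
  have "rearr a n \<le> t" if "t \<in> RS a m" for t
    using that assms(3) by (intro rearr_le) (auto simp: RS_def)
  then show ?thesis unfolding rearr_RS[of a m]
    by (intro cInf_greatest RS_ne assms)
qed

lemma upper_finite:
  fixes N :: "real \<Rightarrow> real" and a :: "nat \<Rightarrow> real"
  assumes mono: "mono_on {0..} N" and u: "u > 0" and bd: "bounded (range a)"
  shows "finite F \<Longrightarrow> card F = n \<Longrightarrow>
    (\<Sum>k\<in>F. N (\<bar>a k\<bar> / u)) \<le> (\<Sum>i\<in>{1..n}. N (rearr a i / u))"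
proof (induction n arbitrary: F)
  case 0
  then show ?case by simp
next
  case (Suc n)
  then have ne: "F \<noteq> {}" by auto
  define v where "v = Min ((\<lambda>k. \<bar>a k\<bar>) ` F)"
  have "v \<in> (\<lambda>k. \<bar>a k\<bar>) ` F" unfolding v_def using Suc.prems ne by (intro Min_in) auto
  then obtain m where m: "m \<in> F" "\<bar>a m\<bar> = v" by auto
  have vle: "v \<le> \<bar>a k\<bar>" if "k \<in> F" for k unfolding v_def using Suc.prems that by (intro Min_le) auto
  have le: "\<bar>a m\<bar> \<le> rearr a (Suc n)"
  proof (rule ccontr)
    assume "\<not> ?thesis"
    then obtain t where t: "t < \<bar>a m\<bar>" "finite {k. \<bar>a k\<bar> > t}" "card {k. \<bar>a k\<bar> > t} < Suc n"
      using rearr_lt[OF bd, of "Suc n" "\<bar>a m\<bar>"] by auto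
    have "F \<subseteq> {k. \<bar>a k\<bar> > t}" using vle m t(1) by force
    then have "card F \<le> card {k. \<bar>a k\<bar> > t}" using t(2) by (rule card_mono[rotated])
    then show False using t(3) Suc.prems by simp
  qed
  have "N (\<bar>a m\<bar> / u) \<le> N (rearr a (Suc n) / u)"
    using le u by (intro mono_onD[OF mono]) (auto simp: divide_right_mono)
  moreover have "(\<Sum>k\<in>F - {m}. N (\<bar>a k\<bar> / u)) \<le> (\<Sum>i\<in>{1..n}. N (rearr a i / u))"
    using Suc.prems m by (intro Suc.IH) auto
  moreover have "(\<Sum>k\<in>F. N (\<bar>a k\<bar> / u)) = N (\<bar>a m\<bar> / u) + (\<Sum>k\<in>F - {m}. N (\<bar>a k\<bar> / u))"
    using Suc.prems m by (simp add: sum.remove)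
  moreover have "(\<Sum>i\<in>{1..Suc n}. N (rearr a i / u)) = (\<Sum>i\<in>{1..n}. N (rearr a i / u)) + N (rearr a (Suc n) / u)"
    by simp
  ultimately show ?case by linarith
qed

lemma exists_max_outside:
  fixes a :: "nat \<Rightarrow> real"
  assumes "finite F" "\<And>t. t > 0 \<Longrightarrow> finite {k. \<bar>a k\<bar> > t}"
  shows "\<exists>k. k \<notin> F \<and> (\<forall>j. j \<notin> F \<longrightarrow> \<bar>a j\<bar> \<le> \<bar>a k\<bar>)"
proof (cases "\<exists>j. j \<notin> F \<and> \<bar>a j\<bar> > 0")
  case True
  then obtain j where j: "j \<notin> F" "\<bar>a j\<bar> > 0" by auto
  define G where "G = {i. \<bar>a i\<bar> \<ge> \<bar>a j\<bar>} - F"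
  have "G \<subseteq> {k. \<bar>a k\<bar> > \<bar>a j\<bar> / 2}" unfolding G_def using j by auto
  then have fG: "finite G" using assms(2)[of "\<bar>a j\<bar> / 2"] j by (auto intro: finite_subset)
  have jG: "j \<in> G" unfolding G_def using j by auto
  define w where "w = Max ((\<lambda>k. \<bar>a k\<bar>) ` G)"
  have "w \<in> (\<lambda>k. \<bar>a k\<bar>) ` G" unfolding w_def using fG jG by (intro Max_in) auto
  then obtain k where k: "k \<in> G" "\<bar>a k\<bar> = w" by auto
  have "\<bar>a i\<bar> \<le> w" if "i \<in> G" for i unfolding w_def using fG that by (intro Max_ge) auto
  then have "\<forall>i. i \<notin> F \<longrightarrow> \<bar>a i\<bar> \<le> \<bar>a k\<bar>"
    using k jG unfolding G_def by (smt (verit) DiffI mem_Collect_eq)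
  then show ?thesis using k unfolding G_def by auto
next
  case False
  obtain k where "k \<notin> F" using ex_new_if_finite[OF infinite_UNIV_nat assms(1)] by auto
  then show ?thesis using False by (intro exI[of _ k]) auto
qed

lemma lower_finite:
  fixes N :: "real \<Rightarrow> real" and a :: "nat \<Rightarrow> real"
  assumes mono: "mono_on {0..} N" and u: "u > 0" and bd: "bounded (range a)"
    and fin: "\<And>t. t > 0 \<Longrightarrow> finite {k. \<bar>a k\<bar> > t}"
  shows "\<exists>F. finite F \<and> card F = M \<and>
    (\<Sum>i\<in>{1..M}. N (rearr a i / u)) \<le> (\<Sum>k\<in>F. N (\<bar>a k\<bar> / u))"
proof (induction M)
  case 0
  then show ?case by (intro exI[of _ "{}"]) auto
next
  case (Suc M)
  then obtain F where F: "finite F" "card F = M"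
    "(\<Sum>i\<in>{1..M}. N (rearr a i / u)) \<le> (\<Sum>k\<in>F. N (\<bar>a k\<bar> / u))" by auto
  obtain k where k: "k \<notin> F" "\<forall>j. j \<notin> F \<longrightarrow> \<bar>a j\<bar> \<le> \<bar>a k\<bar>"
    using exists_max_outside[OF F(1) fin] by auto
  have sub: "{j. \<bar>a j\<bar> > \<bar>a k\<bar>} \<subseteq> F" using k(2) by force
  then have fs: "finite {j. \<bar>a j\<bar> > \<bar>a k\<bar>}" using F(1) by (rule finite_subset)
  have "card {j. \<bar>a j\<bar> > \<bar>a k\<bar>} \<le> M" using card_mono[OF F(1) sub] F(2) by simp
  then have le: "rearr a (Suc M) \<le> \<bar>a k\<bar>" using fs by (intro rearr_le) auto
  have "N (rearr a (Suc M) / u) \<le> N (\<bar>a k\<bar> / u)"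
    using le u rearr_nonneg[OF bd, of "Suc M"] by (intro mono_onD[OF mono]) (auto simp: divide_right_mono)
  then show ?case using F k
    by (intro exI[of _ "insert k F"]) auto
qed

section \<open>Dyadic blocks\<close>

lemma blockA:
  fixes g :: "nat \<Rightarrow> real"
  assumes dec: "\<And>m n. 1 \<le> m \<Longrightarrow> m \<le> n \<Longrightarrow> g n \<le> g m"
  shows "(\<Sum>n\<in>{1..<2^J}. g n) \<le> (\<Sum>j<J. 2^j * g (2^j))"
proof (induction J)
  case 0
  then show ?case by simp
next
  case (Suc J)
  have "(\<Sum>n\<in>{1..<2^Suc J}. g n) = (\<Sum>n\<in>{1..<2^J}. g n) + (\<Sum>n\<in>{2^J..<2^Suc J}. g n)"
    by (rule sum.atLeastLessThan_concat[symmetric]) auto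
  moreover have "(\<Sum>n\<in>{2^J..<2^Suc J}. g n) \<le> of_nat (card {2^J..<(2::nat)^Suc J}) * g (2^J)"
    by (rule sum_bounded_above) (auto intro: dec)
  moreover have "card {2^J..<(2::nat)^Suc J} = 2^J" by simp
  ultimately show ?case using Suc.IH by simp
qed

lemma blockB:
  fixes g :: "nat \<Rightarrow> real"
  assumes dec: "\<And>m n. 1 \<le> m \<Longrightarrow> m \<le> n \<Longrightarrow> g n \<le> g m"
    and nn: "\<And>n. 1 \<le> n \<Longrightarrow> 0 \<le> g n"
  shows "(\<Sum>j<Suc J. 2^j * g (2^j)) \<le> 2 * (\<Sum>n\<in>{1..<2^J+1}. g n)"
proof (induction J)
  case 0
  then show ?case using nn[of 1] by simp
next
  case (Suc J)
  have "(\<Sum>n\<in>{1..<2^Suc J+1}. g n) = (\<Sum>n\<in>{1..<2^J+1}. g n) + (\<Sum>n\<in>{2^J+1..<2^Suc J+1}. g n)"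
    by (rule sum.atLeastLessThan_concat[symmetric]) auto
  moreover have "of_nat (card {2^J+1..<(2::nat)^Suc J+1}) * g (2^Suc J) \<le> (\<Sum>n\<in>{2^J+1..<2^Suc J+1}. g n)"
    by (rule sum_bounded_below) (auto intro: dec)
  moreover have "card {2^J+1..<(2::nat)^Suc J+1} = 2^J" by simp
  ultimately show ?case using Suc.IH by simp
qed


lemma N_nonneg:
  fixes N :: "real \<Rightarrow> real"
  assumes "mono_on {0..} N" "N 0 = 0" "x \<ge> 0" shows "N x \<ge> 0"
  using mono_onD[OF assms(1), of 0 x] assms by auto

lemma ennreal_sum_le_suminf:
  fixes f :: "nat \<Rightarrow> ennreal"
  shows "finite I \<Longrightarrow> sum f I \<le> suminf f"
  by (rule sum_le_suminf[OF summableI]) auto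

lemma sumA:
  fixes N :: "real \<Rightarrow> real" and a :: "nat \<Rightarrow> real"
  assumes mono: "mono_on {0..} N" and N0: "N 0 = 0" and u: "u > 0" and bd: "bounded (range a)"
  shows "(\<Sum>k. ennreal (N (\<bar>a k\<bar> / u))) \<le> (\<Sum>j. ennreal (2^j * N (rearr a (2^j) / u)))"
proof -
  define g where "g n = N (rearr a n / u)" for n
  have gnn: "0 \<le> g n" if "1 \<le> n" for n
    unfolding g_def using rearr_nonneg[OF bd that] u by (intro N_nonneg[OF mono N0]) auto
  have gdec: "g n \<le> g m" if "1 \<le> m" "m \<le> n" for m n
    unfolding g_def using rearr_antimono[OF bd that] rearr_nonneg[OF bd, of n] that u
    by (intro mono_onD[OF mono]) (auto simp: divide_right_mono)
  have fnn: "0 \<le> N (\<bar>a k\<bar> / u)" for k using u by (intro N_nonneg[OF mono N0]) auto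
  show ?thesis
    unfolding suminf_eq_SUP[of "\<lambda>k. ennreal (N (\<bar>a k\<bar> / u))"]
  proof (rule SUP_least)
    fix M :: nat
    have "(\<Sum>k<M. ennreal (N (\<bar>a k\<bar> / u))) = ennreal (\<Sum>k<M. N (\<bar>a k\<bar> / u))"
      using fnn by (intro sum_ennreal) auto
    also have "\<dots> \<le> ennreal (\<Sum>n\<in>{1..M}. g n)"
      unfolding g_def by (intro ennreal_leI upper_finite[OF mono u bd]) auto
    also have "\<dots> \<le> ennreal (\<Sum>n\<in>{1..<2^Suc M}. g n)"
    proof (intro ennreal_leI sum_mono2)
      have "M < 2^M" by (rule less_exp)
      also have "(2::nat)^M < 2^Suc M" by simp
      finally show "{1..M} \<subseteq> {1..<2^Suc M}" by auto
    qed (use gnn in auto)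
    also have "\<dots> \<le> ennreal (\<Sum>j<Suc M. 2^j * g (2^j))"
      by (intro ennreal_leI blockA gdec) auto
    also have "\<dots> = (\<Sum>j<Suc M. ennreal (2^j * g (2^j)))"
      using gnn by (intro sum_ennreal[symmetric]) auto
    also have "\<dots> \<le> (\<Sum>j. ennreal (2^j * N (rearr a (2^j) / u)))"
      unfolding g_def by (rule ennreal_sum_le_suminf) auto
    finally show "(\<Sum>k<M. ennreal (N (\<bar>a k\<bar> / u))) \<le> (\<Sum>j. ennreal (2^j * N (rearr a (2^j) / u)))" .
  qed
qed

lemma convex_quarter:
  fixes N :: "real \<Rightarrow> real"
  assumes cvx: "convex_on {0..} N" and N0: "N 0 = 0" and x: "x \<ge> 0"
  shows "N (x / 4) \<le> N x / 4"
proof -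
  have "N ((1 - 1/4) *\<^sub>R 0 + (1/4) *\<^sub>R x) \<le> (1 - 1/4) * N 0 + (1/4) * N x"
    by (rule convex_onD[OF cvx]) (use x in auto)
  then show ?thesis using N0 by simp
qed

lemma sumB:
  fixes N :: "real \<Rightarrow> real" and a :: "nat \<Rightarrow> real"
  assumes mono: "mono_on {0..} N" and cvx: "convex_on {0..} N" and N0: "N 0 = 0"
    and pos: "\<And>x. x > 0 \<Longrightarrow> N x > 0"
    and u: "u > 0" and bd: "bounded (range a)"
    and S: "(\<Sum>k. ennreal (N (\<bar>a k\<bar> / u))) \<le> 1"
  shows "(\<Sum>j. ennreal (2^j * N (rearr a (2^j) / (4 * u)))) \<le> 1"
proof -
  define f where "f k = N (\<bar>a k\<bar> / u)" for k
  have fnn: "0 \<le> f k" for k unfolding f_def using u by (intro N_nonneg[OF mono N0]) auto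
  have finS: "(\<Sum>k\<in>F. f k) \<le> 1" if "finite F" for F
  proof -
    have "ennreal (\<Sum>k\<in>F. f k) = (\<Sum>k\<in>F. ennreal (f k))"
      using fnn by (intro sum_ennreal[symmetric]) auto
    also have "\<dots> \<le> (\<Sum>k. ennreal (f k))" by (rule ennreal_sum_le_suminf[OF that])
    also have "\<dots> \<le> 1" using S unfolding f_def .
    finally show ?thesis by (simp add: ennreal_le_1)
  qed
  have fin: "finite {k. \<bar>a k\<bar> > t}" if t: "t > 0" for t
  proof (rule ccontr)
    assume inf: "infinite {k. \<bar>a k\<bar> > t}"
    define c where "c = N (t / u)"
    have c: "c > 0" unfolding c_def using t u by (intro pos) auto
    obtain B where B: "finite B" "card B = nat \<lceil>1 / c\<rceil> + 1" "B \<subseteq> {k. \<bar>a k\<bar> > t}"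
      using infinite_arbitrarily_large[OF inf] by blast
    have "of_nat (card B) * c \<le> (\<Sum>k\<in>B. f k)"
    proof (rule sum_bounded_below)
      fix k assume "k \<in> B"
      then have "t < \<bar>a k\<bar>" using B(3) by auto
      then show "c \<le> f k" unfolding c_def f_def using t u
        by (intro mono_onD[OF mono]) (auto simp: divide_right_mono)
    qed
    moreover have "1 / c < real (card B)" using B(2) by linarith
    then have "1 < real (card B) * c" using c by (simp add: field_simps)
    ultimately show False using finS[OF B(1)] by linarith
  qed
  define g where "g n = N (rearr a n / u)" for n
  have gnn: "0 \<le> g n" if "1 \<le> n" for n
    unfolding g_def using rearr_nonneg[OF bd that] u by (intro N_nonneg[OF mono N0]) auto
  have gdec: "g n \<le> g m" if "1 \<le> m" "m \<le> n" for m n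
    unfolding g_def using rearr_antimono[OF bd that] rearr_nonneg[OF bd, of n] that u
    by (intro mono_onD[OF mono]) (auto simp: divide_right_mono)
  have hnn: "0 \<le> 2^j * N (rearr a (2^j) / (4 * u))" for j
    using rearr_nonneg[OF bd, of "2^j"] u by (intro mult_nonneg_nonneg N_nonneg[OF mono N0]) auto
  show ?thesis
    unfolding suminf_eq_SUP
  proof (rule SUP_least)
    fix M :: nat
    show "(\<Sum>j<M. ennreal (2^j * N (rearr a (2^j) / (4 * u)))) \<le> 1"
    proof (cases M)
      case 0
      then show ?thesis by simp
    next
      case (Suc J)
      have "(\<Sum>j<M. 2^j * N (rearr a (2^j) / (4 * u))) \<le> (\<Sum>j<M. 2^j * (g (2^j) / 4))"
      proof (intro sum_mono mult_left_mono)
        fix j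
        have "N (rearr a (2^j) / u / 4) \<le> N (rearr a (2^j) / u) / 4"
          using rearr_nonneg[OF bd, of "2^j"] u by (intro convex_quarter[OF cvx N0]) auto
        then show "N (rearr a (2^j) / (4 * u)) \<le> g (2^j) / 4" unfolding g_def
          by (simp add: field_simps)
      qed auto
      also have "\<dots> = (\<Sum>j<Suc J. 2^j * g (2^j)) / 4"
        by (simp only: Suc sum_divide_distrib times_divide_eq_right)
      also have "\<dots> \<le> 2 * (\<Sum>n\<in>{1..<2^J+1}. g n) / 4"
        using blockB[of g J, OF gdec gnn] by (simp add: divide_right_mono)
      also have "(\<Sum>n\<in>{1..<2^J+1}. g n) = (\<Sum>n\<in>{1..2^J}. g n)"
        by (simp add: atLeastLessThanSuc_atLeastAtMost)
      also obtain F where F: "finite F" "card F = 2^J"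
          "(\<Sum>n\<in>{1..2^J}. g n) \<le> (\<Sum>k\<in>F. f k)"
        using lower_finite[OF mono u bd fin, of "2^J"] unfolding g_def f_def by auto
      then have "2 * (\<Sum>n\<in>{1..2^J}. g n) / 4 \<le> 2 * 1 / 4"
        using finS[OF F(1)] by linarith
      finally have "(\<Sum>j<M. 2^j * N (rearr a (2^j) / (4 * u))) \<le> 1" by simp
      then have "ennreal (\<Sum>j<M. 2^j * N (rearr a (2^j) / (4 * u))) \<le> 1"
        by (simp add: ennreal_le_1)
      moreover have "ennreal (\<Sum>j<M. 2^j * N (rearr a (2^j) / (4 * u))) =
          (\<Sum>j<M. ennreal (2^j * N (rearr a (2^j) / (4 * u))))"
        using hnn by (intro sum_ennreal[symmetric]) auto
      ultimately show ?thesis by simp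
    qed
  qed
qed


lemma blk_eq:
  assumes "2^j \<le> m + 1" "m + 1 < (2::nat)^(j+1)"
  shows "blk m = j"
  unfolding blk_def
proof (rule the_equality)
  show "2^j \<le> m + 1 \<and> m + 1 < (2::nat)^(j+1)" using assms by auto
next
  fix i assume i: "2^i \<le> m + 1 \<and> m + 1 < (2::nat)^(i+1)"
  show "i = j"
  proof (rule ccontr)
    assume "i \<noteq> j"
    then consider "i + 1 \<le> j" | "j + 1 \<le> i" by linarith
    then show False
    proof cases
      case 1
      then have "(2::nat)^(i+1) \<le> 2^j" by (rule power_increasing) auto
      then show False using i assms by linarith
    next
      case 2
      then have "(2::nat)^(j+1) \<le> 2^i" by (rule power_increasing) auto
      then show False using i assms by linarith
    qed
  qed
qed

lemma blk_sum:
  fixes h :: "nat \<Rightarrow> real"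
  shows "(\<Sum>m<2^J - 1. h (blk m)) = (\<Sum>j<J. 2^j * h j)"
proof (induction J)
  case 0
  then show ?case by simp
next
  case (Suc J)
  have p: "(1::nat) \<le> 2^J" by simp
  have "(\<Sum>m<2^Suc J - 1. h (blk m)) = (\<Sum>m\<in>{0..<2^J - 1}. h (blk m)) + (\<Sum>m\<in>{(2::nat)^J - 1..<2^Suc J - 1}. h (blk m))"
    unfolding lessThan_atLeast0 by (rule sum.atLeastLessThan_concat[symmetric]) auto
  moreover have "(\<Sum>m\<in>{(2::nat)^J - 1..<2^Suc J - 1}. h (blk m)) = (\<Sum>m\<in>{(2::nat)^J - 1..<2^Suc J - 1}. h J)"
  proof (rule sum.cong)
    fix m :: nat assume "m \<in> {2^J - 1..<2^Suc J - 1}"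
    then have "2^J \<le> m + 1" "m + 1 < (2::nat)^(J+1)" using p by auto
    then show "h (blk m) = h J" by (simp add: blk_eq)
  qed simp
  moreover have "card {2^J - 1..<(2::nat)^Suc J - 1} = 2^J" using p by simp
  ultimately show ?case using Suc.IH unfolding lessThan_atLeast0 by simp
qed

lemma E_eq_UN:
  fixes N :: "real \<Rightarrow> real" and a :: "nat \<Rightarrow> real"
  assumes mono: "mono_on {0..} N" and N0: "N 0 = 0"
  shows "E_lN_norm N a = UN_norm N a"
proof -
  have eq: "(\<Sum>m. ennreal (N (\<bar>a (blk m)\<bar> / u))) = (\<Sum>j. ennreal (2^j * N (\<bar>a j\<bar> / u)))"
    if u: "u > 0" for u
  proof -
    define h where "h j = N (\<bar>a j\<bar> / u)" for j
    have hnn: "0 \<le> h j" for j unfolding h_def using u by (intro N_nonneg[OF mono N0]) auto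
    have key: "(\<Sum>m<2^J - 1. ennreal (h (blk m))) = (\<Sum>j<J. ennreal (2^j * h j))" for J
    proof -
      have "(\<Sum>m<2^J - 1. ennreal (h (blk m))) = ennreal (\<Sum>m<2^J - 1. h (blk m))"
        using hnn by (intro sum_ennreal) auto
      also have "\<dots> = ennreal (\<Sum>j<J. 2^j * h j)" by (simp only: blk_sum)
      also have "\<dots> = (\<Sum>j<J. ennreal (2^j * h j))"
        using hnn by (intro sum_ennreal[symmetric]) auto
      finally show ?thesis .
    qed
    have "(\<Sum>m. ennreal (h (blk m))) = (\<Sum>j. ennreal (2^j * h j))"
    proof (rule antisym)
      show "(\<Sum>m. ennreal (h (blk m))) \<le> (\<Sum>j. ennreal (2^j * h j))"
        unfolding suminf_eq_SUP[of "\<lambda>m. ennreal (h (blk m))"]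
      proof (rule SUP_least)
        fix M :: nat
        have "M < 2^M" by (rule less_exp)
        then have "M \<le> 2^M - 1" by linarith
        then have "(\<Sum>m<M. ennreal (h (blk m))) \<le> (\<Sum>m<2^M - 1. ennreal (h (blk m)))"
          by (intro sum_mono2) auto
        also have "\<dots> = (\<Sum>j<M. ennreal (2^j * h j))" by (rule key)
        also have "\<dots> \<le> (\<Sum>j. ennreal (2^j * h j))" by (rule ennreal_sum_le_suminf) auto
        finally show "(\<Sum>m<M. ennreal (h (blk m))) \<le> (\<Sum>j. ennreal (2^j * h j))" .
      qed
    next
      show "(\<Sum>j. ennreal (2^j * h j)) \<le> (\<Sum>m. ennreal (h (blk m)))"
        unfolding suminf_eq_SUP[of "\<lambda>j. ennreal (2^j * h j)"]
      proof (rule SUP_least)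
        fix J :: nat
        have "(\<Sum>j<J. ennreal (2^j * h j)) = (\<Sum>m<2^J - 1. ennreal (h (blk m)))" by (rule key[symmetric])
        also have "\<dots> \<le> (\<Sum>m. ennreal (h (blk m)))" by (rule ennreal_sum_le_suminf) auto
        finally show "(\<Sum>j<J. ennreal (2^j * h j)) \<le> (\<Sum>m. ennreal (h (blk m)))" .
      qed
    qed
    then show ?thesis unfolding h_def .
  qed
  show ?thesis
    unfolding E_lN_norm_def lN_norm_def UN_norm_def
    by (rule arg_cong[where f = Inf]) (use eq in auto)
qed

lemma mult4_Inf:
  fixes S :: "ennreal set"
  assumes "\<And>x. x \<in> S \<Longrightarrow> y \<le> 4 * x"
  shows "y \<le> 4 * Inf S"
proof (cases "S = {}")
  case True
  then show ?thesis by simp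
next
  case False
  have "4 * Inf S = Inf ((\<lambda>x. 4 * x) ` S)"
  proof (rule continuous_at_Inf_mono)
    show "mono (\<lambda>x. 4 * (x::ennreal))" by (auto simp: mono_def mult_left_mono)
    show "continuous (at_right (Inf S)) (\<lambda>x. 4 * (x::ennreal))"
      unfolding continuous_within by (intro ennreal_tendsto_cmult tendsto_ident_at) auto
  qed (use False in auto)
  moreover have "y \<le> Inf ((\<lambda>x. 4 * x) ` S)" using assms by (auto intro: Inf_greatest)
  ultimately show ?thesis by simp
qed

theorem mainTheorem18:
  fixes N :: "real \<Rightarrow> real"
  assumes "orlicz_function N" and "N 1 = 1" and "delta2_zero N"
  shows "(\<forall>a :: nat \<Rightarrow> real. bounded (range a) \<longrightarrow>
            lN_norm N a \<le> UN_norm N (\<lambda>j. rearr a (2 ^ j)) \<and>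
            UN_norm N (\<lambda>j. rearr a (2 ^ j)) \<le> 4 * lN_norm N a)
       \<and> (\<exists>C :: real. C > 0 \<and> (\<forall>a :: nat \<Rightarrow> real.
            E_lN_norm N a \<le> ennreal C * UN_norm N a \<and>
            UN_norm N a \<le> ennreal C * E_lN_norm N a))"
proof -
  have mono: "mono_on {0..} N" and cvx: "convex_on {0..} N" and N0: "N 0 = 0"
    using assms(1) unfolding orlicz_function_def by auto
  have pos: "\<And>x. x > 0 \<Longrightarrow> N x > 0" using assms(3) unfolding delta2_zero_def by auto
  have part1: "lN_norm N a \<le> UN_norm N (\<lambda>j. rearr a (2 ^ j)) \<and>
            UN_norm N (\<lambda>j. rearr a (2 ^ j)) \<le> 4 * lN_norm N a" if bd: "bounded (range a)" for a
  proof
    show "lN_norm N a \<le> UN_norm N (\<lambda>j. rearr a (2 ^ j))"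
      unfolding lN_norm_def UN_norm_def
    proof (rule Inf_superset_mono, safe)
      fix u assume u: "0 < u" and le: "(\<Sum>j. ennreal (2^j * N (\<bar>rearr a (2^j)\<bar> / u))) \<le> 1"
      have "\<bar>rearr a (2^j)\<bar> = rearr a (2^j)" for j using rearr_nonneg[OF bd, of "2^j"] by simp
      then have "(\<Sum>j. ennreal (2^j * N (rearr a (2^j) / u))) \<le> 1" using le by simp
      then have "(\<Sum>k. ennreal (N (\<bar>a k\<bar> / u))) \<le> 1"
        using sumA[OF mono N0 u bd] by (rule order_trans[rotated])
      then show "\<exists>v. ennreal u = ennreal v \<and> 0 < v \<and> (\<Sum>k. ennreal (N (\<bar>a k\<bar> / v))) \<le> 1"
        using u by auto
    qed
    show "UN_norm N (\<lambda>j. rearr a (2 ^ j)) \<le> 4 * lN_norm N a"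
      unfolding lN_norm_def
    proof (rule mult4_Inf, safe)
      fix u assume u: "0 < u" and le: "(\<Sum>k. ennreal (N (\<bar>a k\<bar> / u))) \<le> 1"
      have "\<bar>rearr a (2^j)\<bar> = rearr a (2^j)" for j using rearr_nonneg[OF bd, of "2^j"] by simp
      then have "(\<Sum>j. ennreal (2^j * N (\<bar>rearr a (2^j)\<bar> / (4 * u)))) \<le> 1"
        using sumB[OF mono cvx N0 pos u bd le] by simp
      then have "UN_norm N (\<lambda>j. rearr a (2 ^ j)) \<le> ennreal (4 * u)"
        unfolding UN_norm_def using u by (intro Inf_lower) auto
      then show "UN_norm N (\<lambda>j. rearr a (2 ^ j)) \<le> 4 * ennreal u"
        by (simp add: ennreal_mult')
    qed
  qed
  show ?thesis
    using part1 E_eq_UN[OF mono N0] by (intro conjI allI impI exI[of _ 1]) auto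
qed

end
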